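(* There is a constant $C_t>0$, independent of $h$, such that for all $\phi\in E_h(\Omega)$, all $T\in\mathcal T_h$ and every edge $e$ of $T$ (with $\nabla\phi$ taken as the gradient of $\phi|_T$), $$\|\beta\nabla\phi\cdot\mathbf n_e\|_{L^2(e)}^2\le C_t\,h^{-1}\,\|\beta\nabla\phi\|_{L^2(T)}^2.$$
   Context: Let $\Omega\subset\mathbb R^2$ be a convex polygonal domain, $\Omega=\Omega_1\cup\Gamma\cup\Omega_2$ with $\Omega_1,\Omega_2$ (also written $\Omega^-,\Omega^+$) disjoint open subdomains separated by a $C^2$ interface curve $\Gamma$. The coefficient $\beta$ satisfies $\beta|_{\Omega_i}\in C^1(\Omega_i)$ and $0<\underline\beta<\beta<\overline\beta$. Mesh: $\mathcal T_h$ is a regular triangulation of $\Omega$ of mesh size $h$, not necessarily aligned with $\Gamma$; triangles cut by $\Gamma$ are interface elements. Each edge $e$ carries a fixed unit normal $\mathbf n_e$. IFEM space: on a non-interface triangle $S_h(T)=\mathcal P^1(T)$. An interface triangle $T$ with vertices $A_1,A_2,A_3$ is divided by the interface (represented in $T$ by the segment joining the two points where $\Gamma$ crosses $\partial T$) into $T^+\subset\Omega^+$, $T^-\subset\Omega^-$, and $\widehat S_h(T)=\mathrm{span}\{\hat\lambda_1,\hat\lambda_2,\hat\lambda_3\}$, where $\hat\lambda_j$ is the unique function linear on each of $T^\pm$ with $\hat\lambda_j(A_i)=\delta_{ij}$ that is continuous and has continuous $\beta\nabla\hat\lambda_j\cdot\mathbf n_\Gamma$ across the interface ($\mathbf n_\Gamma$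 the unit normal to the interface). $\widehat S_h(\Omega)$ consists of the functions $\phi$ with $\phi|_T\in S_h(T)$ (non-interface $T$) or $\phi|_T\in\widehat S_h(T)$ (interface $T$), single-valued at mesh vertices and vanishing at vertices on $\partial\Omega$. $C_h(\Omega)$ is the space of piecewise constants on $\mathcal T_h$, and $E_h(\Omega)=\widehat S_h(\Omega)+C_h(\Omega)$. *)

theory Defs
  imports "HOL-Analysis.Analysis"
begin

type_synonym pt = "real^2"

definition convex_polygonal_domain :: "pt set \<Rightarrow> bool" where
  "convex_polygonal_domain \<Omega> \<longleftrightarrow> \<Omega> \<noteq> {} \<and> (\<exists>P. finite P \<and> \<Omega> = interior (convex hull P))"

definition C1_on :: "pt set \<Rightarrow> (pt \<Rightarrow> real) \<Rightarrow> bool" where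
  "C1_on S f \<longleftrightarrow> (\<exists>g :: pt \<Rightarrow> pt. continuous_on S g \<and>
      (\<forall>x\<in>S. (f has_derivative (\<lambda>v. g x \<bullet> v)) (at x)))"

definition C2_interface :: "pt set \<Rightarrow> pt set \<Rightarrow> bool" where
  "C2_interface \<Omega> \<Gamma> \<longleftrightarrow> (\<exists>(\<gamma>::real \<Rightarrow> pt) \<gamma>' \<gamma>''. simple_path \<gamma> \<and>
      (\<forall>t\<in>{0..1}. (\<gamma> has_vector_derivative \<gamma>' t) (at t within {0..1}) \<and>
                 (\<gamma>' has_vector_derivative \<gamma>'' t) (at t within {0..1}) \<and> \<gamma>' t \<noteq> 0) \<and>
      continuous_on {0..1} \<gamma>'' \<and> \<Gamma> = path_image \<gamma> \<inter> \<Omega>)"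

text \<open>A triangle is given by its set of three (non-collinear) vertices K; the element is convex hull K.
  A (conforming) triangulation of Omega.\<close>
definition triangulation :: "pt set \<Rightarrow> pt set set \<Rightarrow> bool" where
  "triangulation \<Omega> \<T> \<longleftrightarrow> finite \<T> \<and> \<T> \<noteq> {} \<and>
     (\<forall>K\<in>\<T>. card K = 3 \<and> \<not> collinear K) \<and>
     \<Union>((\<lambda>K. convex hull K) ` \<T>) = closure \<Omega> \<and>
     (\<forall>K\<in>\<T>. \<forall>K'\<in>\<T>. K \<noteq> K' \<longrightarrow> convex hull K \<inter> convex hull K' = convex hull (K \<inter> K'))"

definition meshsize :: "pt set set \<Rightarrow> real" where
  "meshsize \<T> = Max ((\<lambda>K. diameter (convex hull K)) ` \<T>)"

definition inradius :: "pt set \<Rightarrow> real" where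
  "inradius K = Sup {r. \<exists>c. ball c r \<subseteq> convex hull K}"

definition interface_elem :: "pt set \<Rightarrow> pt set \<Rightarrow> bool" where
  "interface_elem \<Gamma> K \<longleftrightarrow> \<Gamma> \<inter> interior (convex hull K) \<noteq> {}"

text \<open>Admissible mesh of a regular (shape regular and quasi-uniform, parameter sigma) family;
  cutp K = the two points where Gamma crosses the boundary of an interface element K.\<close>
definition admissible_mesh :: "pt set \<Rightarrow> pt set \<Rightarrow> real \<Rightarrow> pt set set \<Rightarrow> (pt set \<Rightarrow> pt \<times> pt) \<Rightarrow> bool" where
  "admissible_mesh \<Omega> \<Gamma> \<sigma> \<T> cutp \<longleftrightarrow> triangulation \<Omega> \<T> \<and>
     (\<forall>K\<in>\<T>. meshsize \<T> \<le> \<sigma> * inradius K) \<and>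
     (\<forall>K\<in>\<T>. interface_elem \<Gamma> K \<longrightarrow>
        fst (cutp K) \<noteq> snd (cutp K) \<and>
        closure \<Gamma> \<inter> frontier (convex hull K) = {fst (cutp K), snd (cutp K)} \<and>
        open_segment (fst (cutp K)) (snd (cutp K)) \<subseteq> interior (convex hull K))"

definition perp :: "pt \<Rightarrow> pt" where
  "perp v = vector [- (v$2), v$1]"

definition P1_local :: "pt set \<Rightarrow> (pt \<Rightarrow> real) \<Rightarrow> bool" where
  "P1_local K v \<longleftrightarrow> (\<exists>g c. \<forall>x\<in>convex hull K. v x = g \<bullet> x + c)"

definition IFE_local :: "pt set \<Rightarrow> pt \<Rightarrow> pt \<Rightarrow> real \<Rightarrow> real \<Rightarrow> (pt \<Rightarrow> real) \<Rightarrow> bool" where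
  "IFE_local K D E b1 b2 v \<longleftrightarrow> (let \<nu> = perp (E - D) in
     \<exists>g1 c1 g2 c2.
       (\<forall>x\<in>convex hull K. (x - D) \<bullet> \<nu> \<ge> 0 \<longrightarrow> v x = g1 \<bullet> x + c1) \<and>
       (\<forall>x\<in>convex hull K. (x - D) \<bullet> \<nu> \<le> 0 \<longrightarrow> v x = g2 \<bullet> x + c2) \<and>
       (\<forall>x. (x - D) \<bullet> \<nu> = 0 \<longrightarrow> g1 \<bullet> x + c1 = g2 \<bullet> x + c2) \<and>
       b1 * (g1 \<bullet> \<nu>) = b2 * (g2 \<bullet> \<nu>))"

text \<open>Global IFE space hat S_h: a function is a family of local functions, one per element.\<close>
definition IFE_space :: "pt set \<Rightarrow> pt set \<Rightarrow> pt set set \<Rightarrow> (pt set \<Rightarrow> pt \<times> pt) \<Rightarrow> (pt set \<Rightarrow> bool \<Rightarrow> real)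
      \<Rightarrow> (pt set \<Rightarrow> pt \<Rightarrow> real) set" where
  "IFE_space \<Omega> \<Gamma> \<T> cutp bc = {\<psi>.
     (\<forall>K\<in>\<T>. if interface_elem \<Gamma> K
               then IFE_local K (fst (cutp K)) (snd (cutp K)) (bc K True) (bc K False) (\<psi> K)
               else P1_local K (\<psi> K)) \<and>
     (\<forall>K\<in>\<T>. \<forall>K'\<in>\<T>. \<forall>a\<in>K \<inter> K'. \<psi> K a = \<psi> K' a) \<and>
     (\<forall>K\<in>\<T>. \<forall>a\<in>K. a \<in> frontier \<Omega> \<longrightarrow> \<psi> K a = 0)}"

definition E_space :: "pt set \<Rightarrow> pt set \<Rightarrow> pt set set \<Rightarrow> (pt set \<Rightarrow> pt \<times> pt) \<Rightarrow> (pt set \<Rightarrow> bool \<Rightarrow> real)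
      \<Rightarrow> (pt set \<Rightarrow> pt \<Rightarrow> real) set" where
  "E_space \<Omega> \<Gamma> \<T> cutp bc = {\<phi>. \<exists>\<psi>\<in>IFE_space \<Omega> \<Gamma> \<T> cutp bc. \<exists>c :: pt set \<Rightarrow> real.
       \<forall>K\<in>\<T>. \<forall>x\<in>convex hull K. \<phi> K x = \<psi> K x + c K}"

text \<open>Gradient of v at an interior point, and gradient of v restricted to the element K,
  extended to the closed element by taking limits from the interior.\<close>
definition grad :: "(pt \<Rightarrow> real) \<Rightarrow> pt \<Rightarrow> pt" where
  "grad v y = (\<chi> i. frechet_derivative v (at y) (axis i 1))"

definition gradT :: "pt set \<Rightarrow> (pt \<Rightarrow> real) \<Rightarrow> pt \<Rightarrow> pt" where
  "gradT K v x = Lim (at x within {y \<in> interior (convex hull K). v differentiable (at y)}) (grad v)"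

definition L2sq_elem :: "pt set \<Rightarrow> (pt \<Rightarrow> pt) \<Rightarrow> real" where
  "L2sq_elem K f = integral (convex hull K) (\<lambda>x. (norm (f x))\<^sup>2)"

definition L2sq_edge :: "pt \<Rightarrow> pt \<Rightarrow> (pt \<Rightarrow> real) \<Rightarrow> real" where
  "L2sq_edge a b f = dist a b * integral {0..1} (\<lambda>t. (f (a + t *\<^sub>R (b - a)))\<^sup>2)"

end

theory Submission
  imports Defs
begin

lemma grad_affine:
  assumes "open U" "y \<in> U" "\<forall>z\<in>U. v z = g \<bullet> z + c"
  shows "(v has_derivative (\<lambda>h. g \<bullet> h)) (at y)" "v differentiable (at y)" "grad v y = g"
proof -
  have d0: "((\<lambda>z. g \<bullet> z + c) has_derivative (\<lambda>h. g \<bullet> h)) (at y)"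
    by (auto intro!: derivative_eq_intros)
  show d: "(v has_derivative (\<lambda>h. g \<bullet> h)) (at y)"
    by (rule has_derivative_transform_within_open[OF d0 assms(1,2)]) (use assms in auto)
  then show "v differentiable (at y)" unfolding differentiable_def by blast
  have "frechet_derivative v (at y) = (\<lambda>h. g \<bullet> h)" using frechet_derivative_at[OF d] by simp
  then show "grad v y = g" unfolding grad_def by (simp add: vec_eq_iff inner_axis)
qed

lemma gradT_side:
  fixes K :: "pt set" and v :: "pt \<Rightarrow> real" and l :: "pt \<Rightarrow> real"
  assumes fin: "finite K" and ne: "interior (convex hull K) \<noteq> {}" and cl: "continuous_on UNIV l"
    and x: "x \<in> convex hull K" "l x > 0"
    and eq: "\<forall>y\<in>interior (convex hull K). l y > 0 \<longrightarrow> v y = g \<bullet> y + c"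
  shows "gradT K v x = g"
proof -
  define T where "T = convex hull K"
  define S where "S = {y \<in> interior T. v differentiable (at y)}"
  define W where "W = {y. l y > 0}"
  define U where "U = interior T \<inter> W"
  have oW: "open W" unfolding W_def using cl by (simp add: open_Collect_less continuous_on_const)
  have oU: "open U" unfolding U_def using oW by auto
  have gU: "y \<in> U \<Longrightarrow> v differentiable (at y) \<and> grad v y = g" for y
    using grad_affine[OF oU, of y v g c] eq unfolding U_def W_def T_def by auto
  have US: "U \<subseteq> S" using gU unfolding S_def U_def by auto
  have ev: "eventually (\<lambda>y. grad v y = g) (at x within S)"
    unfolding eventually_at_topological
    by (rule exI[of _ W]) (use oW x gU in \<open>auto simp: W_def S_def U_def\<close>)
  have cT: "closure T = T" unfolding T_def using fin
    by (simp add: compact_convex_hull finite_imp_compact compact_imp_closed closure_closed)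
  have "closure (interior T) = T" using convex_closure_interior[of T] ne cT
    unfolding T_def by (simp add: convex_convex_hull)
  then have "x \<in> W \<inter> closure (interior T)" using x unfolding T_def W_def by auto
  then have "x \<in> closure U" using open_Int_closure_subset[OF oW, of "interior T"]
    unfolding U_def by (auto simp: Int_commute)
  then have "x islimpt U"
    using oU interior_limit_point[of x U] by (auto simp: closure_def interior_open)
  then have "x islimpt S" using US islimpt_subset by blast
  then have nt: "\<not> trivial_limit (at x within S)" by (simp add: trivial_limit_within)
  show ?thesis unfolding gradT_def T_def[symmetric] S_def[symmetric]
    by (rule tendsto_Lim[OF nt tendsto_eventually[OF ev]])
qed


lemma perp_inner_self: "perp u \<bullet> u = 0"
  by (simp add: perp_def inner_vec_def sum_2)

lemma perp_id: "(g \<bullet> u)\<^sup>2 + (g \<bullet> perp u)\<^sup>2 = (norm g)\<^sup>2 * (norm u)\<^sup>2"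
  by (simp only: power2_norm_eq_inner) (simp add: perp_def inner_vec_def sum_2 power2_eq_square algebra_simps)

lemma perp_nz: "u \<noteq> 0 \<Longrightarrow> perp u \<noteq> 0"
  by (auto simp: perp_def vec_eq_iff forall_2)

lemma ratio_bound:
  fixes g1 g2 u :: pt
  assumes "u \<noteq> 0" "(g1 - g2) \<bullet> u = 0" "b1 * (g1 \<bullet> perp u) = b2 * (g2 \<bullet> perp u)"
    "blo \<le> b1" "b1 \<le> bhi" "blo \<le> b2" "b2 \<le> bhi" "0 < blo"
  shows "(norm g1)\<^sup>2 \<le> (bhi/blo)\<^sup>2 * (norm g2)\<^sup>2"
proof -
  define \<rho> where "\<rho> = bhi / blo"
  have r1: "1 \<le> \<rho>" using assms unfolding \<rho>_def by simp
  have e1: "g1 \<bullet> u = g2 \<bullet> u" using assms(2) by (simp add: inner_diff_left)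
  have "\<bar>g1 \<bullet> perp u\<bar> \<le> \<rho> * \<bar>g2 \<bullet> perp u\<bar>"
  proof -
    have "b1 * \<bar>g1 \<bullet> perp u\<bar> = b2 * \<bar>g2 \<bullet> perp u\<bar>" using assms
      by (metis abs_mult abs_of_pos order_less_le_trans)
    also have "\<dots> \<le> bhi * \<bar>g2 \<bullet> perp u\<bar>" using assms by (simp add: mult_right_mono)
    finally have "b1 * \<bar>g1 \<bullet> perp u\<bar> \<le> bhi * \<bar>g2 \<bullet> perp u\<bar>" .
    moreover have "blo * \<bar>g1 \<bullet> perp u\<bar> \<le> b1 * \<bar>g1 \<bullet> perp u\<bar>" using assms by (simp add: mult_right_mono)
    ultimately have "blo * \<bar>g1 \<bullet> perp u\<bar> \<le> bhi * \<bar>g2 \<bullet> perp u\<bar>" by linarith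
    then show ?thesis using assms unfolding \<rho>_def by (simp add: field_simps)
  qed
  then have q1: "(g1 \<bullet> perp u)\<^sup>2 \<le> \<rho>\<^sup>2 * (g2 \<bullet> perp u)\<^sup>2"
    by (metis abs_ge_zero power2_abs power_mono power_mult_distrib)
  have q2: "(g1 \<bullet> u)\<^sup>2 \<le> \<rho>\<^sup>2 * (g2 \<bullet> u)\<^sup>2" using e1 r1
    by (simp add: mult_le_cancel_right1 one_le_power)
  have "(norm g1)\<^sup>2 * (norm u)\<^sup>2 = (g1 \<bullet> u)\<^sup>2 + (g1 \<bullet> perp u)\<^sup>2" using perp_id[of g1 u] by simp
  also have "\<dots> \<le> \<rho>\<^sup>2 * ((g2 \<bullet> u)\<^sup>2 + (g2 \<bullet> perp u)\<^sup>2)" using q1 q2 by (simp add: distrib_left)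
  also have "\<dots> = (\<rho>\<^sup>2 * (norm g2)\<^sup>2) * (norm u)\<^sup>2" using perp_id[of g2 u] by simp
  finally have "(norm g1)\<^sup>2 * (norm u)\<^sup>2 \<le> (\<rho>\<^sup>2 * (norm g2)\<^sup>2) * (norm u)\<^sup>2" .
  then show ?thesis using assms(1) unfolding \<rho>_def by simp
qed

lemma not_both_on_line:
  fixes K :: "pt set" and \<nu> :: pt
  assumes "card K = 3" "a \<in> K" "b \<in> K" "a \<noteq> b" "\<nu> \<noteq> 0"
    "M \<in> interior (convex hull K)" "M \<bullet> \<nu> = k"
    "a \<bullet> \<nu> = k" "b \<bullet> \<nu> = k"
  shows False
proof -
  have fin: "finite K" using assms(1) by (metis card.infinite zero_neq_numeral)
  have "(\<forall>z\<in>K. z \<bullet> \<nu> \<ge> k) \<or> (\<forall>z\<in>K. z \<bullet> \<nu> \<le> k)"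
  proof (rule ccontr)
    assume "\<not> ?thesis"
    then obtain z1 z2 where z: "z1 \<in> K" "z2 \<in> K" "z1 \<bullet> \<nu> < k" "z2 \<bullet> \<nu> > k" by force
    have "z1 \<noteq> a" "z1 \<noteq> b" "z2 \<noteq> a" "z2 \<noteq> b" "z1 \<noteq> z2" using z assms by auto
    then have "card {a, b, z1, z2} = 4" using assms by auto
    moreover have "card {a, b, z1, z2} \<le> card K" using z assms fin by (intro card_mono) auto
    ultimately show False using assms by simp
  qed
  moreover obtain e where e: "e > 0" "ball M e \<subseteq> convex hull K"
    using assms(6) by (meson mem_interior)
  define t where "t = e / (2 * norm \<nu>)"
  have t: "t > 0" "norm (t *\<^sub>R \<nu>) < e" using e assms(5) unfolding t_def by (auto simp: field_simps)
  have p1: "M + t *\<^sub>R \<nu> \<in> convex hull K" "M - t *\<^sub>R \<nu> \<in> convex hull K"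
    using e t by (auto simp: dist_norm intro!: subsetD[OF e(2)])
  have nn: "\<nu> \<bullet> \<nu> > 0" using assms(5) by simp
  have v1: "(M + t *\<^sub>R \<nu>) \<bullet> \<nu> > k" "(M - t *\<^sub>R \<nu>) \<bullet> \<nu> < k"
    using assms(7) t nn by (auto simp: inner_add_left inner_diff_left)
  have c1: "convex {z. z \<bullet> \<nu> \<ge> k}" using convex_halfspace_ge[of k \<nu>] by (simp add: inner_commute)
  have c2: "convex {z. z \<bullet> \<nu> \<le> k}" using convex_halfspace_le[of \<nu> k] by (simp add: inner_commute)
  ultimately show False
  proof (elim disjE)
    assume "\<forall>z\<in>K. z \<bullet> \<nu> \<ge> k"
    then have "convex hull K \<subseteq> {z. z \<bullet> \<nu> \<ge> k}" using c1 by (intro hull_minimal) auto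
    then show False using p1 v1 by auto
  next
    assume "\<forall>z\<in>K. z \<bullet> \<nu> \<le> k"
    then have "convex hull K \<subseteq> {z. z \<bullet> \<nu> \<le> k}" using c2 by (intro hull_minimal) auto
    then show False using p1 v1 by auto
  qed
qed

lemma inradius_ball:
  fixes K :: "pt set"
  assumes "finite K" "0 < p" "p \<le> inradius K"
  shows "\<exists>c r. ball c r \<subseteq> convex hull K \<and> r > p / 2"
proof -
  define A where "A = {r. \<exists>c. ball c r \<subseteq> convex hull K}"
  have "bounded (convex hull K)" using assms(1) by (simp add: finite_imp_bounded_convex_hull)
  then obtain B where B: "convex hull K \<subseteq> ball 0 B" using bounded_subset_ballD by blast
  have "r \<le> \<bar>B\<bar>" if "r \<in> A" for r
  proof -
    from that obtain c where "ball c r \<subseteq> convex hull K" unfolding A_def by blast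
    then have "ball c r \<subseteq> ball 0 B" using B by blast
    then have "dist c 0 + r \<le> B \<or> r \<le> 0" by (simp add: ball_subset_ball_iff)
    then show ?thesis by (smt (verit) zero_le_dist)
  qed
  then have bdd: "bdd_above A" by (auto simp: bdd_above_def)
  have ne: "A \<noteq> {}" proof -
    have "(0::real) \<in> A" unfolding A_def by auto
    then show ?thesis by blast
  qed
  have "p / 2 < Sup A" using assms unfolding inradius_def A_def[symmetric] by linarith
  then obtain r where "r \<in> A" "p/2 < r" using less_cSup_iff[OF ne bdd] by blast
  then show ?thesis unfolding A_def by blast
qed


lemma borel_to_lebesgue_on: "(f::pt \<Rightarrow> real) \<in> borel_measurable borel \<Longrightarrow> f \<in> borel_measurable (lebesgue_on S)"
  by (simp add: measurable_completion measurable_restrict_space1)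

lemma integral_const_lm: "S \<in> lmeasurable \<Longrightarrow> integral S (\<lambda>x::'a::euclidean_space. c) = c * measure lebesgue S"
  by (metis (no_types, lifting) ext
    Henstock_Kurzweil_Integration.integral_mult_left lmeasure_integral
    mult_commute_abs real_scaleR_def scaleR_one)

lemma integral_ge_ae:
  fixes f :: "'a::euclidean_space \<Rightarrow> real"
  assumes "f integrable_on S" "negligible N" "\<forall>x\<in>S-N. c \<le> f x" "S \<in> lmeasurable"
  shows "c * measure lebesgue S \<le> integral S f"
proof -
  define f2 where "f2 x = (if x \<in> N then c else f x)" for x
  have "integral S f2 = integral S f" by (rule integral_spike[OF assms(2)]) (auto simp: f2_def)
  moreover have "f2 integrable_on S" by (rule integrable_spike[OF assms(1,2)]) (auto simp: f2_def)
  moreover have "integral S (\<lambda>x. c) \<le> integral S f2"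
    by (rule integral_le[OF integrable_on_const[OF assms(4)] \<open>f2 integrable_on S\<close>])
       (use assms(3) in \<open>auto simp: f2_def\<close>)
  ultimately show ?thesis using integral_const_lm[OF assms(4)] by simp
qed

lemma integral_le_ae:
  fixes f :: "'a::euclidean_space \<Rightarrow> real"
  assumes "negligible N" "\<forall>x\<in>S-N. f x \<le> c" "0 \<le> c" "S \<in> lmeasurable"
  shows "integral S f \<le> c * measure lebesgue S"
proof (cases "f integrable_on S")
  case True
  define f2 where "f2 x = (if x \<in> N then c else f x)" for x
  have "integral S f2 = integral S f" by (rule integral_spike[OF assms(1)]) (auto simp: f2_def)
  moreover have "f2 integrable_on S" by (rule integrable_spike[OF True assms(1)]) (auto simp: f2_def)
  moreover have "integral S f2 \<le> integral S (\<lambda>x. c)"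
    by (rule integral_le[OF \<open>f2 integrable_on S\<close> integrable_on_const[OF assms(4)]])
       (use assms(2) in \<open>auto simp: f2_def\<close>)
  ultimately show ?thesis using integral_const_lm[OF assms(4)] by simp
next
  case False
  then show ?thesis using assms by (simp add: not_integrable_integral)
qed

lemma Gamma_negligible:
  assumes "C2_interface \<Omega> \<Gamma>" shows "negligible \<Gamma>"
proof -
  obtain \<gamma> :: "real \<Rightarrow> pt" and \<gamma>' \<gamma>'' where d: "\<forall>t\<in>{0..1}. (\<gamma> has_vector_derivative \<gamma>' t) (at t within {0..1})"
    and G: "\<Gamma> = path_image \<gamma> \<inter> \<Omega>"
    using assms unfolding C2_interface_def by blast
  have "\<gamma> differentiable_on {0..1}" unfolding differentiable_on_def
    using d by (meson differentiableI_vector)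
  then have "negligible (\<gamma> ` {0..1})"
    by (intro negligible_differentiable_image_lowdim) auto
  then show ?thesis unfolding G path_image_def by (rule negligible_subset) auto
qed


lemma final_bound:
  fixes T :: "pt set" and G :: "pt \<Rightarrow> pt" and \<beta> :: "pt \<Rightarrow> real" and n :: pt
  assumes Tm: "T \<in> lmeasurable" and Tc: "convex T"
  and abT: "a \<in> T" "b \<in> T" and nn: "norm n = 1"
  and G1: "\<And>x. x \<in> T \<Longrightarrow> w \<bullet> x + k > 0 \<Longrightarrow> G x = g1"
  and G2: "\<And>x. x \<in> T \<Longrightarrow> w \<bullet> x + k < 0 \<Longrightarrow> G x = g2"
  and D3: "w \<noteq> 0 \<or> - k \<noteq> 0" and D4: "\<not> (w \<bullet> a + k = 0 \<and> w \<bullet> b + k = 0)"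
  and D5: "(norm g1)\<^sup>2 \<le> \<rho>\<^sup>2 * (norm g2)\<^sup>2" and D6: "(norm g2)\<^sup>2 \<le> \<rho>\<^sup>2 * (norm g1)\<^sup>2"
  and \<rho>1: "\<rho> \<ge> 1"
  and bT: "\<And>x. x \<in> T \<Longrightarrow> \<beta>lo < \<beta> x \<and> \<beta> x < \<beta>hi" and lo: "0 < \<beta>lo"
  and negN: "negligible N0" and bU: "\<And>x. x \<in> T - N0 \<Longrightarrow> x \<in> U"
  and bmeas: "(\<lambda>x. indicator U x *\<^sub>R \<beta> x) \<in> borel_measurable borel"
  and dab: "dist a b \<le> h" and measT: "\<kappa> * r\<^sup>2 \<le> measure lebesgue T" and r: "r > h / \<sigma> / 2"
  and hpos: "h > 0" and \<sigma>: "\<sigma> > 0" and \<kappa>: "\<kappa> > 0"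
  and C_def: "C = 4 * \<sigma>\<^sup>2 * \<rho>\<^sup>2 * \<beta>hi\<^sup>2 / (\<kappa> * \<beta>lo\<^sup>2)"
  shows "L2sq_edge a b (\<lambda>x. \<beta> x * (G x \<bullet> n)) \<le> C * h powr (-1) * integral T (\<lambda>x. (norm (\<beta> x *\<^sub>R G x))\<^sup>2)"
proof -
  define m1 where "m1 = (norm g1)\<^sup>2"
  define m2 where "m2 = (norm g2)\<^sup>2"
  define M where "M = max m1 m2"
  have \<rho>0: "\<rho> > 0" using \<rho>1 by simp
  have M0: "M \<ge> 0" unfolding M_def m1_def by (simp add: le_max_iff_disj)
  have mlow1: "M / \<rho>\<^sup>2 \<le> m1" using D6 \<rho>1 unfolding M_def m1_def m2_def
    by (auto simp: field_simps intro: order_trans[OF _ mult_right_mono[of 1 "\<rho>\<^sup>2"]] simp: one_le_power)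
  have mlow2: "M / \<rho>\<^sup>2 \<le> m2" using D5 \<rho>1 unfolding M_def m1_def m2_def
    by (auto simp: field_simps intro: order_trans[OF _ mult_right_mono[of 1 "\<rho>\<^sup>2"]] simp: one_le_power)
  define NH where "NH = {x::pt. w \<bullet> x = - k}"
  have negH: "negligible NH" unfolding NH_def using D3 by (rule negligible_hyperplane)
  define N where "N = NH \<union> N0"
  have negN': "negligible N" unfolding N_def using negH negN by simp
  have GT: "x \<in> T \<Longrightarrow> x \<notin> NH \<Longrightarrow> (G x = g1 \<and> w \<bullet> x + k > 0) \<or> (G x = g2 \<and> w \<bullet> x + k < 0)" for x
  proof -
    assume x: "x \<in> T" "x \<notin> NH"
    then have "w \<bullet> x + k \<noteq> 0" unfolding NH_def by auto
    then have "w \<bullet> x + k > 0 \<or> w \<bullet> x + k < 0" by linarith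
    then show ?thesis using G1[OF x(1)] G2[OF x(1)] by blast
  qed
  define F where "F x = (norm (\<beta> x *\<^sub>R G x))\<^sup>2" for x
  define F' where "F' x = (indicator U x *\<^sub>R \<beta> x)\<^sup>2 * (if w \<bullet> x + k > 0 then m1 else m2)" for x
  have FF': "F x = F' x" if "x \<in> T - N" for x
  proof -
    have "x \<in> U" "x \<in> T" "x \<notin> NH" using that bU unfolding N_def by auto
    then show ?thesis using GT[of x] unfolding F_def F'_def m1_def m2_def
      by (auto simp: power_mult_distrib)
  qed
  have F'm: "F' \<in> borel_measurable borel" unfolding F'_def using bmeas by measurable
  have F'b: "\<bar>F' x\<bar> \<le> \<beta>hi\<^sup>2 * M" if "x \<in> T" for x
  proof -
    have "\<bar>indicator U x *\<^sub>R \<beta> x\<bar> \<le> \<beta>hi" using bT[OF that] lo by (auto simp: indicator_def)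
    then have "(indicator U x *\<^sub>R \<beta> x)\<^sup>2 \<le> \<beta>hi\<^sup>2" by (metis abs_ge_zero power2_abs power_mono)
    moreover have "0 \<le> (if w \<bullet> x + k > 0 then m1 else m2)" "(if w \<bullet> x + k > 0 then m1 else m2) \<le> M"
      unfolding M_def m1_def m2_def by auto
    ultimately show ?thesis unfolding F'_def
      by (simp add: abs_mult mult_mono)
  qed
  have F'i: "F' integrable_on T"
    by (rule measurable_bounded_by_integrable_imp_integrable_real[OF borel_to_lebesgue_on[OF F'm]
          integrable_on_const[OF Tm] F'b]) (use Tm in auto)
  have Fi: "F integrable_on T" by (rule integrable_spike[OF F'i negN']) (use FF' in auto)
  have Flow: "\<beta>lo\<^sup>2 * (M / \<rho>\<^sup>2) \<le> F x" if "x \<in> T - N" for x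
  proof -
    have x: "x \<in> T" "x \<notin> NH" using that unfolding N_def by auto
    have b1: "\<beta>lo\<^sup>2 \<le> (\<beta> x)\<^sup>2" using bT[OF x(1)] lo by (simp add: power_mono)
    have g: "M / \<rho>\<^sup>2 \<le> (norm (G x))\<^sup>2" using GT[OF x] mlow1 mlow2 unfolding m1_def m2_def by auto
    have "\<beta>lo\<^sup>2 * (M / \<rho>\<^sup>2) \<le> (\<beta> x)\<^sup>2 * (norm (G x))\<^sup>2"
      by (rule mult_mono[OF b1 g]) (use M0 \<rho>0 in auto)
    then show ?thesis unfolding F_def by (simp add: power_mult_distrib)
  qed
  have I: "\<beta>lo\<^sup>2 * (M / \<rho>\<^sup>2) * measure lebesgue T \<le> integral T F"
    by (rule integral_ge_ae[OF Fi negN']) (use Flow Tm in auto)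
  define f where "f t = (\<beta> (a + t *\<^sub>R (b - a)) * (G (a + t *\<^sub>R (b - a)) \<bullet> n))\<^sup>2" for t
  define N1 where "N1 = {t::real. (w \<bullet> (b - a)) * t = - (w \<bullet> a + k)}"
  have negN1: "negligible N1" unfolding N1_def
  proof (rule negligible_hyperplane[where 'a=real, simplified inner_real_def])
    show "w \<bullet> (b - a) \<noteq> 0 \<or> - (w \<bullet> a + k) \<noteq> 0"
      using D4 by (auto simp: inner_diff_right)
  qed
  have fb: "f t \<le> \<beta>hi\<^sup>2 * M" if "t \<in> {0..1} - N1" for t
  proof -
    define x where "x = a + t *\<^sub>R (b - a)"
    have "x = (1 - t) *\<^sub>R a + t *\<^sub>R b" unfolding x_def by (simp add: algebra_simps)
    then have xT: "x \<in> T" using Tc abT that unfolding convex_alt by auto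
    have "w \<bullet> x + k = (w \<bullet> (b - a)) * t + (w \<bullet> a + k)" unfolding x_def
      by (simp add: inner_add_right algebra_simps)
    then have xN: "x \<notin> NH" using that unfolding NH_def N1_def by auto
    have gm: "(norm (G x))\<^sup>2 \<le> M" using GT[OF xT xN] unfolding M_def m1_def m2_def by auto
    have "\<bar>G x \<bullet> n\<bar> \<le> norm (G x)" using Cauchy_Schwarz_ineq2[of "G x" n] nn by simp
    then have "(G x \<bullet> n)\<^sup>2 \<le> (norm (G x))\<^sup>2" by (metis abs_ge_zero power2_abs power_mono)
    then have gn: "(G x \<bullet> n)\<^sup>2 \<le> M" using gm by linarith
    have bb: "(\<beta> x)\<^sup>2 \<le> \<beta>hi\<^sup>2" using bT[OF xT] lo by (simp add: power_mono)
    have "f t = (\<beta> x)\<^sup>2 * (G x \<bullet> n)\<^sup>2" unfolding f_def x_def by (simp add: power_mult_distrib)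
    also have "\<dots> \<le> \<beta>hi\<^sup>2 * M" by (rule mult_mono[OF bb gn]) (use M0 in auto)
    finally show ?thesis .
  qed
  have J: "integral {0..1} f \<le> \<beta>hi\<^sup>2 * M * measure lebesgue {0..1::real}"
    by (rule integral_le_ae[OF negN1]) (use fb M0 in auto)
  then have J': "integral {0..1} f \<le> \<beta>hi\<^sup>2 * M" by simp
  have LHS: "L2sq_edge a b (\<lambda>x. \<beta> x * (G x \<bullet> n)) \<le> h * (\<beta>hi\<^sup>2 * M)"
  proof -
    have "L2sq_edge a b (\<lambda>x. \<beta> x * (G x \<bullet> n)) = dist a b * integral {0..1} f"
      unfolding L2sq_edge_def f_def by simp
    also have "\<dots> \<le> dist a b * (\<beta>hi\<^sup>2 * M)" using J' by (simp add: mult_left_mono)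
    also have "\<dots> \<le> h * (\<beta>hi\<^sup>2 * M)" using dab M0 by (simp add: mult_right_mono)
    finally show ?thesis .
  qed
  have r2: "h\<^sup>2 / (4 * \<sigma>\<^sup>2) \<le> r\<^sup>2"
  proof -
    have "h / (2 * \<sigma>) \<le> r" using r by simp
    then have "(h / (2 * \<sigma>))\<^sup>2 \<le> r\<^sup>2" using hpos \<sigma> by (intro power_mono) auto
    then show ?thesis by (simp add: power_divide power_mult_distrib)
  qed
  have "\<beta>lo\<^sup>2 * (M / \<rho>\<^sup>2) * (\<kappa> * (h\<^sup>2 / (4 * \<sigma>\<^sup>2))) \<le> \<beta>lo\<^sup>2 * (M / \<rho>\<^sup>2) * (\<kappa> * r\<^sup>2)"
    using r2 \<kappa> M0 \<rho>0 by (intro mult_left_mono) auto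
  also have "\<dots> \<le> \<beta>lo\<^sup>2 * (M / \<rho>\<^sup>2) * measure lebesgue T"
    using measT M0 \<rho>0 by (intro mult_left_mono) auto
  also have "\<dots> \<le> integral T F" by (rule I)
  finally have low: "\<beta>lo\<^sup>2 * (M / \<rho>\<^sup>2) * (\<kappa> * (h\<^sup>2 / (4 * \<sigma>\<^sup>2))) \<le> integral T F" .
  have Cp: "C * h powr (-1) \<ge> 0" unfolding C_def using \<kappa> lo hpos by simp
  have eq: "C * h powr (-1) * (\<beta>lo\<^sup>2 * (M / \<rho>\<^sup>2) * (\<kappa> * (h\<^sup>2 / (4 * \<sigma>\<^sup>2)))) = h * (\<beta>hi\<^sup>2 * M)"
    unfolding C_def using hpos \<sigma> \<kappa> lo \<rho>0
    by (simp add: powr_minus field_simps power2_eq_square)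
  have "h * (\<beta>hi\<^sup>2 * M) \<le> C * h powr (-1) * integral T F"
    using mult_left_mono[OF low Cp] eq by simp
  then show ?thesis using LHS unfolding F_def by linarith
qed


theorem mainTheorem8:
  fixes \<Omega> \<Omega>1 \<Omega>2 \<Gamma> :: "pt set" and \<beta> :: "pt \<Rightarrow> real" and \<beta>lo \<beta>hi :: real
  assumes "convex_polygonal_domain \<Omega>"
    and "open \<Omega>1" and "open \<Omega>2" and "\<Omega>1 \<inter> \<Omega>2 = {}" and "\<Omega>1 \<inter> \<Gamma> = {}" and "\<Omega>2 \<inter> \<Gamma> = {}"
    and "\<Omega> = \<Omega>1 \<union> \<Gamma> \<union> \<Omega>2"
    and "C2_interface \<Omega> \<Gamma>"
    and "C1_on \<Omega>1 \<beta>" and "C1_on \<Omega>2 \<beta>"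
    and "0 < \<beta>lo" and "\<forall>x\<in>closure \<Omega>. \<beta>lo < \<beta> x \<and> \<beta> x < \<beta>hi"
  shows "\<forall>\<sigma>>0. \<exists>C>0. \<forall>\<T> cutp bc \<phi> K a b n.
     admissible_mesh \<Omega> \<Gamma> \<sigma> \<T> cutp \<and>
     (\<forall>K s. \<beta>lo \<le> bc K s \<and> bc K s \<le> \<beta>hi) \<and>
     \<phi> \<in> E_space \<Omega> \<Gamma> \<T> cutp bc \<and>
     K \<in> \<T> \<and> a \<in> K \<and> b \<in> K \<and> a \<noteq> b \<and> norm n = 1 \<and> n \<bullet> (b - a) = 0 \<longrightarrow>
       L2sq_edge a b (\<lambda>x. \<beta> x * (gradT K (\<phi> K) x \<bullet> n))
         \<le> C * (meshsize \<T>) powr (-1) * L2sq_elem K (\<lambda>x. \<beta> x *\<^sub>R gradT K (\<phi> K) x)"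
proof (intro allI impI)
  fix \<sigma> :: real assume \<sigma>: "\<sigma> > 0"
  obtain P where P: "\<Omega> \<noteq> {}" "\<Omega> = interior (convex hull P)"
    using assms(1) unfolding convex_polygonal_domain_def by blast
  then obtain x0 where "x0 \<in> \<Omega>" by blast
  then have "x0 \<in> closure \<Omega>" using closure_subset by blast
  then have lohi: "\<beta>lo < \<beta>hi" using assms(12) by force
  have lo: "\<beta>lo > 0" by fact
  define \<rho> where "\<rho> = \<beta>hi / \<beta>lo"
  have \<rho>1: "\<rho> \<ge> 1" using lohi lo unfolding \<rho>_def by simp
  define \<kappa> where "\<kappa> = measure lebesgue (ball (0::pt) 1)"
  have \<kappa>: "\<kappa> > 0" unfolding \<kappa>_def using circle_area[of 1] by simp
  define C where "C = 4 * \<sigma>\<^sup>2 * \<rho>\<^sup>2 * \<beta>hi\<^sup>2 / (\<kappa> * \<beta>lo\<^sup>2)"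
  have Cpos: "C > 0" unfolding C_def using \<sigma> \<rho>1 \<kappa> lo lohi by simp
  have oO: "open \<Omega>" using P by simp
  have cO: "convex \<Omega>" using P by simp
  have Uopen: "open (\<Omega>1 \<union> \<Omega>2)" using assms(2,3) by auto
  have bcont: "continuous_on (\<Omega>1 \<union> \<Omega>2) \<beta>"
  proof (rule continuous_at_imp_continuous_on, intro ballI)
    fix x assume "x \<in> \<Omega>1 \<union> \<Omega>2"
    then obtain g :: "pt \<Rightarrow> pt" where "(\<beta> has_derivative (\<lambda>v. g x \<bullet> v)) (at x)"
      using assms(9,10) unfolding C1_on_def by blast
    then show "isCont \<beta> x" by (rule has_derivative_continuous)
  qed
  have bmeas: "(\<lambda>x. indicator (\<Omega>1 \<union> \<Omega>2) x *\<^sub>R \<beta> x) \<in> borel_measurable borel"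
    by (rule borel_measurable_continuous_on_indicator[OF _ bcont]) (use Uopen in auto)
  have negG: "negligible \<Gamma>" using Gamma_negligible[OF assms(8)] .
  have negF: "negligible (frontier \<Omega>)" using negligible_convex_frontier[OF cO] .
  show "\<exists>C>0. \<forall>\<T> cutp bc \<phi> K a b n.
     admissible_mesh \<Omega> \<Gamma> \<sigma> \<T> cutp \<and>
     (\<forall>K s. \<beta>lo \<le> bc K s \<and> bc K s \<le> \<beta>hi) \<and>
     \<phi> \<in> E_space \<Omega> \<Gamma> \<T> cutp bc \<and>
     K \<in> \<T> \<and> a \<in> K \<and> b \<in> K \<and> a \<noteq> b \<and> norm n = 1 \<and> n \<bullet> (b - a) = 0 \<longrightarrow>
       L2sq_edge a b (\<lambda>x. \<beta> x * (gradT K (\<phi> K) x \<bullet> n))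
         \<le> C * (meshsize \<T>) powr (-1) * L2sq_elem K (\<lambda>x. \<beta> x *\<^sub>R gradT K (\<phi> K) x)"
  proof (rule exI[of _ C], intro conjI Cpos allI impI)
    fix \<T> cutp bc \<phi> K a b and n :: pt
    assume H: "admissible_mesh \<Omega> \<Gamma> \<sigma> \<T> cutp \<and>
     (\<forall>K s. \<beta>lo \<le> bc K s \<and> bc K s \<le> \<beta>hi) \<and>
     \<phi> \<in> E_space \<Omega> \<Gamma> \<T> cutp bc \<and>
     K \<in> \<T> \<and> a \<in> K \<and> b \<in> K \<and> a \<noteq> b \<and> norm n = 1 \<and> n \<bullet> (b - a) = 0"
    then have adm: "admissible_mesh \<Omega> \<Gamma> \<sigma> \<T> cutp" and bcb: "\<forall>K s. \<beta>lo \<le> bc K s \<and> bc K s \<le> \<beta>hi"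
      and phiE: "\<phi> \<in> E_space \<Omega> \<Gamma> \<T> cutp bc" and KT: "K \<in> \<T>" and ab: "a \<in> K" "b \<in> K" "a \<noteq> b"
      and nn: "norm n = 1" by auto
    have tri: "triangulation \<Omega> \<T>" using adm unfolding admissible_mesh_def by blast
    have finT: "finite \<T>" using tri unfolding triangulation_def by blast
    have cK: "card K = 3" using tri KT unfolding triangulation_def by auto
    have finK: "finite K" using cK by (metis card.infinite zero_neq_numeral)
    define T where "T = convex hull K"
    have Tb: "bounded T" "convex T" "compact T" unfolding T_def using finK
      by (auto simp: finite_imp_bounded_convex_hull compact_convex_hull finite_imp_compact)
    have Tm: "T \<in> lmeasurable" using Tb by (simp add: measurable_convex)
    have TO: "T \<subseteq> closure \<Omega>" using tri KT unfolding triangulation_def T_def by blast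
    define h where "h = meshsize \<T>"
    have dh: "diameter T \<le> h" unfolding h_def meshsize_def T_def using finT KT by (intro Max_ge) auto
    have abT: "a \<in> T" "b \<in> T" using ab unfolding T_def by (auto intro: hull_inc)
    have dab: "dist a b \<le> h" using diameter_bounded_bound[OF Tb(1) abT] dh by linarith
    have hpos: "h > 0" using dab ab(3) by (smt (verit) zero_less_dist_iff)
    have "h \<le> \<sigma> * inradius K" using adm KT unfolding admissible_mesh_def h_def by blast
    then have "h / \<sigma> \<le> inradius K" using \<sigma> by (simp add: field_simps)
    then obtain c0 r where c0: "ball c0 r \<subseteq> T" and r: "r > h / \<sigma> / 2"
      using inradius_ball[OF finK, of "h/\<sigma>"] hpos \<sigma> unfolding T_def by auto
    have rpos: "r > 0" using r hpos \<sigma> by (smt (verit) divide_pos_pos)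
    have intT: "interior T \<noteq> {}"
    proof -
      have "ball c0 r \<subseteq> interior T" using interior_maximal[OF c0] by simp
      then show ?thesis using rpos by (metis centre_in_ball empty_iff subsetD)
    qed
    have measT: "\<kappa> * r\<^sup>2 \<le> measure lebesgue T"
    proof -
      have "measure lebesgue (ball c0 r) \<le> measure lebesgue T"
        by (rule measure_mono_fmeasurable[OF c0]) (use Tm in auto)
      moreover have "measure lebesgue (ball c0 r) = \<kappa> * r\<^sup>2" unfolding \<kappa>_def using circle_area rpos by simp
      ultimately show ?thesis by simp
    qed
    obtain \<psi> cc where psiI: "\<psi> \<in> IFE_space \<Omega> \<Gamma> \<T> cutp bc"
      and phieq: "\<forall>x\<in>T. \<phi> K x = \<psi> K x + cc K"
      using phiE KT unfolding E_space_def T_def by blast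
    have psiK: "if interface_elem \<Gamma> K
               then IFE_local K (fst (cutp K)) (snd (cutp K)) (bc K True) (bc K False) (\<psi> K)
               else P1_local K (\<psi> K)" using psiI KT unfolding IFE_space_def by blast
    have "\<exists>w k g1 g2 c1 c2.
       (\<forall>y\<in>interior T. w \<bullet> y + k > 0 \<longrightarrow> \<phi> K y = g1 \<bullet> y + c1) \<and>
       (\<forall>y\<in>interior T. - (w \<bullet> y + k) > 0 \<longrightarrow> \<phi> K y = g2 \<bullet> y + c2) \<and>
       (w \<noteq> 0 \<or> - k \<noteq> 0) \<and> \<not> (w \<bullet> a + k = 0 \<and> w \<bullet> b + k = 0) \<and>
       (norm g1)\<^sup>2 \<le> \<rho>\<^sup>2 * (norm g2)\<^sup>2 \<and> (norm g2)\<^sup>2 \<le> \<rho>\<^sup>2 * (norm g1)\<^sup>2"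
    proof (cases "interface_elem \<Gamma> K")
      case False
      then have "P1_local K (\<psi> K)" using psiK by simp
      then obtain g c where gc: "\<forall>x\<in>T. \<psi> K x = g \<bullet> x + c" unfolding P1_local_def T_def by blast
      have "(norm g)\<^sup>2 \<le> \<rho>\<^sup>2 * (norm g)\<^sup>2" using \<rho>1
        by (simp add: mult_le_cancel_right1 one_le_power)
      moreover have "\<forall>y\<in>interior T. \<phi> K y = g \<bullet> y + (c + cc K)"
        using gc phieq interior_subset by fastforce
      ultimately show ?thesis
        by (intro exI[of _ 0] exI[of _ 1] exI[of _ g] exI[of _ g] exI[of _ "c + cc K"] exI[of _ "c + cc K"]) simp
    next
      case True
      define D where "D = fst (cutp K)"
      define E where "E = snd (cutp K)"
      define \<nu> where "\<nu> = perp (E - D)"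
      have DE: "D \<noteq> E" "open_segment D E \<subseteq> interior T" using adm KT True
        unfolding admissible_mesh_def D_def E_def T_def by auto
      have "IFE_local K D E (bc K True) (bc K False) (\<psi> K)" using psiK True unfolding D_def E_def by simp
      then obtain g1 c1 g2 c2 where
        s1: "\<forall>x\<in>T. (x - D) \<bullet> \<nu> \<ge> 0 \<longrightarrow> \<psi> K x = g1 \<bullet> x + c1" and
        s2: "\<forall>x\<in>T. (x - D) \<bullet> \<nu> \<le> 0 \<longrightarrow> \<psi> K x = g2 \<bullet> x + c2" and
        s3: "\<forall>x. (x - D) \<bullet> \<nu> = 0 \<longrightarrow> g1 \<bullet> x + c1 = g2 \<bullet> x + c2" and
        s4: "bc K True * (g1 \<bullet> \<nu>) = bc K False * (g2 \<bullet> \<nu>)"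
        unfolding IFE_local_def Let_def \<nu>_def[symmetric] T_def[symmetric] by blast
      have u0: "E - D \<noteq> 0" using DE by simp
      have nu0: "\<nu> \<noteq> 0" unfolding \<nu>_def using perp_nz[OF u0] .
      have ED: "(E - D) \<bullet> \<nu> = 0" unfolding \<nu>_def using perp_inner_self by (simp add: inner_commute)
      have lin: "(x - D) \<bullet> \<nu> = \<nu> \<bullet> x + - (D \<bullet> \<nu>)" for x by (simp add: inner_diff_left inner_commute[of \<nu>])
      have e1: "g1 \<bullet> D + c1 = g2 \<bullet> D + c2" using s3[rule_format, of D] by simp
      have e2: "g1 \<bullet> E + c1 = g2 \<bullet> E + c2" using s3[rule_format, of E] ED by simp
      have gu: "(g1 - g2) \<bullet> (E - D) = 0" using e1 e2 by (simp add: inner_diff_left inner_diff_right)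
      have gu': "(g2 - g1) \<bullet> (E - D) = 0" using e1 e2 by (simp add: inner_diff_left inner_diff_right)
      have r1: "(norm g1)\<^sup>2 \<le> \<rho>\<^sup>2 * (norm g2)\<^sup>2"
        unfolding \<rho>_def by (rule ratio_bound[OF u0 gu s4[unfolded \<nu>_def]]) (use bcb lo in auto)
      have r2: "(norm g2)\<^sup>2 \<le> \<rho>\<^sup>2 * (norm g1)\<^sup>2"
        unfolding \<rho>_def by (rule ratio_bound[OF u0 gu' s4[unfolded \<nu>_def, symmetric]]) (use bcb lo in auto)
      have nb: "\<not> (\<nu> \<bullet> a + - (D \<bullet> \<nu>) = 0 \<and> \<nu> \<bullet> b + - (D \<bullet> \<nu>) = 0)"
      proof
        assume "\<nu> \<bullet> a + - (D \<bullet> \<nu>) = 0 \<and> \<nu> \<bullet> b + - (D \<bullet> \<nu>) = 0"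
        then have "a \<bullet> \<nu> = D \<bullet> \<nu>" "b \<bullet> \<nu> = D \<bullet> \<nu>" by (auto simp: inner_commute)
        moreover have "midpoint D E \<in> interior T" using DE midpoint_in_open_segment by blast
        moreover have "midpoint D E \<bullet> \<nu> = D \<bullet> \<nu>" using ED
          by (simp add: midpoint_def inner_add_left inner_diff_left algebra_simps)
        ultimately show False using not_both_on_line[OF cK ab nu0, of "midpoint D E" "D \<bullet> \<nu>"]
          unfolding T_def by blast
      qed
      have A1: "\<forall>y\<in>interior T. \<nu> \<bullet> y + - (D \<bullet> \<nu>) > 0 \<longrightarrow> \<phi> K y = g1 \<bullet> y + (c1 + cc K)"
      proof (intro ballI impI)
        fix y assume "y \<in> interior T" "\<nu> \<bullet> y + - (D \<bullet> \<nu>) > 0"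
        then have "y \<in> T" "(y - D) \<bullet> \<nu> \<ge> 0" using interior_subset lin[of y] by auto
        then show "\<phi> K y = g1 \<bullet> y + (c1 + cc K)" using s1 phieq by simp
      qed
      have A2: "\<forall>y\<in>interior T. - (\<nu> \<bullet> y + - (D \<bullet> \<nu>)) > 0 \<longrightarrow> \<phi> K y = g2 \<bullet> y + (c2 + cc K)"
      proof (intro ballI impI)
        fix y assume "y \<in> interior T" "- (\<nu> \<bullet> y + - (D \<bullet> \<nu>)) > 0"
        then have "y \<in> T" "(y - D) \<bullet> \<nu> \<le> 0" using interior_subset lin[of y] by auto
        then show "\<phi> K y = g2 \<bullet> y + (c2 + cc K)" using s2 phieq by simp
      qed
      show ?thesis using A1 A2 nu0 nb r1 r2 by blast
    qed
    then obtain w k g1 g2 c1 c2 where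
       D1: "\<forall>y\<in>interior T. w \<bullet> y + k > 0 \<longrightarrow> \<phi> K y = g1 \<bullet> y + c1" and
       D2: "\<forall>y\<in>interior T. - (w \<bullet> y + k) > 0 \<longrightarrow> \<phi> K y = g2 \<bullet> y + c2" and
       D3: "w \<noteq> 0 \<or> - k \<noteq> 0" and D4: "\<not> (w \<bullet> a + k = 0 \<and> w \<bullet> b + k = 0)" and
       D5: "(norm g1)\<^sup>2 \<le> \<rho>\<^sup>2 * (norm g2)\<^sup>2" and D6: "(norm g2)\<^sup>2 \<le> \<rho>\<^sup>2 * (norm g1)\<^sup>2"
      by blast
    define G where "G x = gradT K (\<phi> K) x" for x
    have cl1: "continuous_on UNIV (\<lambda>y. w \<bullet> y + k)" by (intro continuous_intros)
    have cl2: "continuous_on UNIV (\<lambda>y. - (w \<bullet> y + k))" by (intro continuous_intros)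
    have G1: "G x = g1" if "x \<in> T" "w \<bullet> x + k > 0" for x
      unfolding G_def by (rule gradT_side[OF finK intT[unfolded T_def] cl1]) (use that D1 in \<open>auto simp: T_def\<close>)
    have G2: "G x = g2" if "x \<in> T" "w \<bullet> x + k < 0" for x
      unfolding G_def by (rule gradT_side[OF finK intT[unfolded T_def] cl2]) (use that D2 in \<open>auto simp: T_def\<close>)

    have bU: "x \<in> \<Omega>1 \<union> \<Omega>2" if "x \<in> T - (\<Gamma> \<union> frontier \<Omega>)" for x
    proof -
      have "x \<in> closure \<Omega>" "x \<notin> frontier \<Omega>" "x \<notin> \<Gamma>" using that TO by auto
      then have "x \<in> interior \<Omega>" unfolding frontier_def by auto
      then have "x \<in> \<Omega>" using interior_subset by blast
      then show ?thesis using assms(7) \<open>x \<notin> \<Gamma>\<close> by auto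
    qed
    have bT: "\<beta>lo < \<beta> x \<and> \<beta> x < \<beta>hi" if "x \<in> T" for x using TO that assms(12) by blast
    have negN0: "negligible (\<Gamma> \<union> frontier \<Omega>)" using negG negF by simp
    have fb: "L2sq_edge a b (\<lambda>x. \<beta> x * (G x \<bullet> n)) \<le> C * h powr (-1) * integral T (\<lambda>x. (norm (\<beta> x *\<^sub>R G x))\<^sup>2)"
      by (rule final_bound[OF Tm Tb(2) abT nn G1 G2 D3 D4 D5 D6 \<rho>1 bT lo negN0 bU bmeas dab measT r hpos \<sigma> \<kappa> C_def])
    then show "L2sq_edge a b (\<lambda>x. \<beta> x * (gradT K (\<phi> K) x \<bullet> n))
         \<le> C * (meshsize \<T>) powr (-1) * L2sq_elem K (\<lambda>x. \<beta> x *\<^sub>R gradT K (\<phi> K) x)"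
      unfolding L2sq_elem_def G_def T_def h_def by simp
  qed
qed

end
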